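(* Let $\mathcal C$ be a $\Delta$-complex labeled over $B(X,P)$ with set of $0$-cells $\mathcal C^{(0)}$. Define partial maps on $\mathcal C^{(0)}$ by: for $x\in X$, $v\cdot x=w$ iff there is a $1$-cell labeled $x$ from $v$ to $w$; $v\cdot x^{-1}=w$ iff there is a $1$-cell labeled $x$ from $w$ to $v$; for $\rho\in P$, $v\cdot\rho=v$ iff $v$ is the root of some cell labeled $\rho$ (and undefined otherwise). These are partial injections, and this action of the generators extends to a well-defined right action of $M(X,P)$ on $\mathcal C^{(0)}$ by partial injections (i.e. a homomorphism from $M(X,P)$ into the symmetric inverse monoid on $\mathcal C^{(0)}$, acting on the right).
   Context: A $\Delta$-complex is a CW-complex in which each $k$-cell $c$ has a distinguished characteristic map $\sigma_c\colon\Delta^k\to\mathcal C$, $\Delta^k=[v_0,\dots,v_k]$ the standard simplex with ordered vertices, such that the restriction of $\sigma_c$ to each $(k-1)$-face (identified order-preservingly with $\Delta^{k-1}$) is the distinguished characteristic map of a $(k-1)$-cell. The root of $c$ is $\sigma_c(v_0)$; a $1$-cell $e$ is directed from $\sigma_e(v_0)$ to $\sigma_e(v_1)$. An immersion is a continuous map that is a local homeomorphism onto its image and commutes with characteristic maps (each $k$-cell $d$ maps onto a $k$-cell with $f\circ\sigma_d=\sigma_{f(d)}$). $B(X,P)$ is a $\Delta$-complex with one $0$-cell, $1$-cells indexed by $X$, $k$-cells ($2\le k\le n$) indexed by $P_k$, index sets pairwise disjoint, $P=\bigcup P_k$. $\mathcal C$ is labeled over $B(X,P)$ via an immersion $f_{\mathcal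 C}\colon\mathcal C\to B(X,P)$, and $\ell(c)$ is the index of $f_{\mathcal C}(c)$; $\ell(e^{-1})=\ell(e)^{-1}$. Boundary labels: for a $k$-cell $c$ ($k\ge2$) with characteristic map $\sigma$, let $c_i$ be the $(k-1)$-cell whose characteristic map is $\sigma$ restricted to the face omitting $v_i$, and $e(c)=\sigma([v_0,v_1])$; $bl(c)=\ell(\sigma[v_0,v_1])\ell(\sigma[v_1,v_2])\ell(\sigma[v_0,v_2])^{-1}$ if $k=2$, and $bl(c)=\ell(c_k)\cdots\ell(c_1)\ell(e(c))\ell(c_0)\ell(e(c))^{-1}$ if $k\ge3$; $bl(\rho)$ denotes the boundary label of the cell of $B(X,P)$ labeled $\rho$. $M(X,P)$ is the inverse monoid presented by generators $X\cup P$ and relations $\rho^2=\rho$, $\rho=\rho\,bl(\rho)$ for $\rho\in P$. *)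

theory Defs
  imports Main
begin

text \<open>A Delta-complex is encoded combinatorially: a set of cells C, a dimension
function, and face maps: face c i is the (k-1)-cell whose characteristic map is the
restriction of that of c to the face omitting vertex v_i.\<close>

definition delta_complex :: "'c set \<Rightarrow> ('c \<Rightarrow> nat) \<Rightarrow> ('c \<Rightarrow> nat \<Rightarrow> 'c) \<Rightarrow> bool" where
  "delta_complex C dim face \<longleftrightarrow>
     (\<forall>c\<in>C. \<forall>i. 0 < dim c \<and> i \<le> dim c \<longrightarrow> face c i \<in> C \<and> dim (face c i) = dim c - 1) \<and>
     (\<forall>c\<in>C. \<forall>i j. 2 \<le> dim c \<and> i < j \<and> j \<le> dim c \<longrightarrow>
        face (face c j) i = face (face c i) (j - 1))"

text \<open>sub face k c vs: the cell whose characteristic map is the restriction of that of the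
k-cell c to the face spanned by the vertices v_s, s in vs (vs strictly increasing).\<close>

fun sub :: "('c \<Rightarrow> nat \<Rightarrow> 'c) \<Rightarrow> nat \<Rightarrow> 'c \<Rightarrow> nat list \<Rightarrow> 'c" where
  "sub face 0 c vs = c"
| "sub face (Suc k) c vs =
     (if set vs = {0..Suc k} then c
      else (let i = Min ({0..Suc k} - set vs)
            in sub face k (face c i) (map (\<lambda>s. if s < i then s else s - 1) vs)))"

definition subcell :: "('c \<Rightarrow> nat) \<Rightarrow> ('c \<Rightarrow> nat \<Rightarrow> 'c) \<Rightarrow> 'c \<Rightarrow> nat list \<Rightarrow> 'c" where
  "subcell dim face c vs = sub face (dim c) c vs"

definition face_index :: "nat \<Rightarrow> nat list \<Rightarrow> bool" where
  "face_index k vs \<longleftrightarrow> vs \<noteq> [] \<and> sorted_wrt (<) vs \<and> set vs \<subseteq> {0..k}"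

text \<open>Cells of B(X,P): None is the unique 0-cell, Some a for a in X (1-cells) or
a in P k (k-cells, 2 <= k <= n).\<close>

definition Bcells :: "'a set \<Rightarrow> (nat \<Rightarrow> 'a set) \<Rightarrow> nat \<Rightarrow> 'a option set" where
  "Bcells X P n = insert None (Some ` (X \<union> (\<Union>k\<in>{2..n}. P k)))"

definition Bdim :: "'a set \<Rightarrow> (nat \<Rightarrow> 'a set) \<Rightarrow> 'a option \<Rightarrow> nat" where
  "Bdim X P c = (case c of None \<Rightarrow> 0
                  | Some a \<Rightarrow> (if a \<in> X then 1 else (THE k. a \<in> P k)))"

definition B_structure :: "'a set \<Rightarrow> (nat \<Rightarrow> 'a set) \<Rightarrow> nat \<Rightarrow> ('a option \<Rightarrow> nat \<Rightarrow> 'a option) \<Rightarrow> bool" where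
  "B_structure X P n faceB \<longleftrightarrow>
     (\<forall>k. X \<inter> P k = {}) \<and>
     (\<forall>j k. j \<noteq> k \<longrightarrow> P j \<inter> P k = {}) \<and>
     (\<forall>k. (k < 2 \<or> n < k) \<longrightarrow> P k = {}) \<and>
     delta_complex (Bcells X P n) (Bdim X P) faceB"

text \<open>Generators of M(X,P) as letters: (a, False) is a, (a, True) is a^{-1}.\<close>

definition winv :: "('a \<times> bool) list \<Rightarrow> ('a \<times> bool) list" where
  "winv w = rev (map (\<lambda>(a, b). (a, \<not> b)) w)"

definition bl_word :: "('a option \<Rightarrow> nat \<Rightarrow> 'a option) \<Rightarrow> nat \<Rightarrow> 'a \<Rightarrow> ('a \<times> bool) list" where
  "bl_word faceB k \<rho> =
     (let c = Some \<rho>; e = sub faceB k c [0, 1] in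
      if k = 2 then
        [(the (sub faceB 2 c [0, 1]), False), (the (sub faceB 2 c [1, 2]), False),
         (the (sub faceB 2 c [0, 2]), True)]
      else map (\<lambda>i. (the (faceB c i), False)) (rev [1..<k+1])
           @ [(the e, False), (the (faceB c 0), False), (the e, True)])"

text \<open>The congruence on words over A \<union> A^{-1} defining Inv<A | R>: generated by the
Wagner relations and R.\<close>

inductive_set inv_cong :: "'a set \<Rightarrow> (('a \<times> bool) list \<times> ('a \<times> bool) list) set
    \<Rightarrow> (('a \<times> bool) list \<times> ('a \<times> bool) list) set" for A R where
  refl: "w \<in> lists (A \<times> UNIV) \<Longrightarrow> (w, w) \<in> inv_cong A R"
| sym: "(u, v) \<in> inv_cong A R \<Longrightarrow> (v, u) \<in> inv_cong A R"
| trans: "(u, v) \<in> inv_cong A R \<Longrightarrow> (v, w) \<in> inv_cong A R \<Longrightarrow> (u, w) \<in> inv_cong A R"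
| ctx: "(u, v) \<in> inv_cong A R \<Longrightarrow> p \<in> lists (A \<times> UNIV) \<Longrightarrow> q \<in> lists (A \<times> UNIV)
          \<Longrightarrow> (p @ u @ q, p @ v @ q) \<in> inv_cong A R"
| wagner1: "u \<in> lists (A \<times> UNIV) \<Longrightarrow> (u @ winv u @ u, u) \<in> inv_cong A R"
| wagner2: "u \<in> lists (A \<times> UNIV) \<Longrightarrow> v \<in> lists (A \<times> UNIV)
          \<Longrightarrow> (u @ winv u @ v @ winv v, v @ winv v @ u @ winv u) \<in> inv_cong A R"
| rel: "(u, v) \<in> R \<Longrightarrow> (u, v) \<in> inv_cong A R"

definition M_alphabet :: "'a set \<Rightarrow> (nat \<Rightarrow> 'a set) \<Rightarrow> nat \<Rightarrow> 'a set" where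
  "M_alphabet X P n = X \<union> (\<Union>k\<in>{2..n}. P k)"

definition M_relations :: "(nat \<Rightarrow> 'a set) \<Rightarrow> nat \<Rightarrow> ('a option \<Rightarrow> nat \<Rightarrow> 'a option)
    \<Rightarrow> (('a \<times> bool) list \<times> ('a \<times> bool) list) set" where
  "M_relations P n faceB =
     {([(\<rho>, False), (\<rho>, False)], [(\<rho>, False)]) | \<rho> k. k \<in> {2..n} \<and> \<rho> \<in> P k} \<union>
     {([(\<rho>, False)], (\<rho>, False) # bl_word faceB k \<rho>) | \<rho> k. k \<in> {2..n} \<and> \<rho> \<in> P k}"

definition M_equiv :: "'a set \<Rightarrow> (nat \<Rightarrow> 'a set) \<Rightarrow> nat \<Rightarrow> ('a option \<Rightarrow> nat \<Rightarrow> 'a option)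
    \<Rightarrow> (('a \<times> bool) list \<times> ('a \<times> bool) list) set" where
  "M_equiv X P n faceB = inv_cong (M_alphabet X P n) (M_relations P n faceB)"

text \<open>lab is the immersion f_C : C \<rightarrow> B(X,P): it maps each k-cell onto a k-cell,
commutes with characteristic maps (hence with all faces), and is a local homeomorphism
onto its image: distinct cells containing a common cell d at the same position
(same face operator vs) have distinct images.\<close>

definition labeled_over :: "'c set \<Rightarrow> ('c \<Rightarrow> nat) \<Rightarrow> ('c \<Rightarrow> nat \<Rightarrow> 'c) \<Rightarrow> ('c \<Rightarrow> 'a option)
    \<Rightarrow> 'a set \<Rightarrow> (nat \<Rightarrow> 'a set) \<Rightarrow> nat \<Rightarrow> ('a option \<Rightarrow> nat \<Rightarrow> 'a option) \<Rightarrow> bool" where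
  "labeled_over C dim face lab X P n faceB \<longleftrightarrow>
     delta_complex C dim face \<and>
     (\<forall>c\<in>C. lab c \<in> Bcells X P n \<and> Bdim X P (lab c) = dim c) \<and>
     (\<forall>c\<in>C. \<forall>i. 0 < dim c \<and> i \<le> dim c \<longrightarrow> lab (face c i) = faceB (lab c) i) \<and>
     (\<forall>c\<in>C. \<forall>c'\<in>C. \<forall>vs. dim c = dim c' \<and> face_index (dim c) vs \<and>
        subcell dim face c vs = subcell dim face c' vs \<and> lab c = lab c' \<longrightarrow> c = c')"

definition vertices :: "'c set \<Rightarrow> ('c \<Rightarrow> nat) \<Rightarrow> 'c set" where
  "vertices C dim = {v \<in> C. dim v = 0}"

definition gen_rel :: "'c set \<Rightarrow> ('c \<Rightarrow> nat) \<Rightarrow> ('c \<Rightarrow> nat \<Rightarrow> 'c) \<Rightarrow> ('c \<Rightarrow> 'a option)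
    \<Rightarrow> 'a set \<Rightarrow> 'a \<Rightarrow> ('c \<times> 'c) set" where
  "gen_rel C dim face lab X a =
     (if a \<in> X then
        {(subcell dim face e [0], subcell dim face e [1]) | e. e \<in> C \<and> dim e = 1 \<and> lab e = Some a}
      else {(subcell dim face c [0], subcell dim face c [0]) | c. c \<in> C \<and> lab c = Some a})"

definition letter_rel :: "('a \<Rightarrow> ('c \<times> 'c) set) \<Rightarrow> 'a \<times> bool \<Rightarrow> ('c \<times> 'c) set" where
  "letter_rel G l = (if snd l then (G (fst l))\<inverse> else G (fst l))"

text \<open>Right action of a word: v \<cdot> (l1 l2 ... lm) = (...((v \<cdot> l1) \<cdot> l2)...) \<cdot> lm.\<close>

definition word_rel :: "('a \<Rightarrow> ('c \<times> 'c) set) \<Rightarrow> 'c set \<Rightarrow> ('a \<times> bool) list \<Rightarrow> ('c \<times> 'c) set" where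
  "word_rel G V w = foldr (\<lambda>l r. letter_rel G l O r) w (Id_on V)"

definition partial_injection_on :: "'c set \<Rightarrow> ('c \<times> 'c) set \<Rightarrow> bool" where
  "partial_injection_on V r \<longleftrightarrow> r \<subseteq> V \<times> V \<and> single_valued r \<and> single_valued (r\<inverse>)"

end

theory Submission
  imports Defs
begin


locale GA =
  fixes G :: "'a \<Rightarrow> ('c \<times> 'c) set" and V :: "'c set"
  assumes sub: "\<And>a. G a \<subseteq> V \<times> V"
    and sv: "\<And>a. single_valued (G a)"
    and svi: "\<And>a. single_valued ((G a)\<inverse>)"
begin

lemma letter_sub: "letter_rel G l \<subseteq> V \<times> V"
  using sub[of "fst l"] by (auto simp: letter_rel_def)

lemma letter_sv: "single_valued (letter_rel G l)" "single_valued ((letter_rel G l)\<inverse>)"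
  using sv[of "fst l"] svi[of "fst l"] by (auto simp: letter_rel_def)

lemma W_Nil: "word_rel G V [] = Id_on V" by (simp add: word_rel_def)
lemma W_Cons: "word_rel G V (l # u) = letter_rel G l O word_rel G V u"
  by (simp add: word_rel_def)

lemma W_sub: "word_rel G V u \<subseteq> V \<times> V"
  apply (induction u)
  using letter_sub by (auto simp: W_Nil W_Cons)

lemma foldr_comp: "foldr (\<lambda>l r. letter_rel G l O r) u (A O B) = foldr (\<lambda>l r. letter_rel G l O r) u A O B"
  by (induction u) (auto simp: O_assoc)

lemma Id_comp: "R \<subseteq> V \<times> V \<Longrightarrow> Id_on V O R = R" by auto
lemma comp_Id: "R \<subseteq> V \<times> V \<Longrightarrow> R O Id_on V = R" by auto

lemma W_append: "word_rel G V (u @ v) = word_rel G V u O word_rel G V v"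
proof -
  have "word_rel G V (u @ v) = foldr (\<lambda>l r. letter_rel G l O r) u (Id_on V O word_rel G V v)"
    using Id_comp[OF W_sub[of v]] by (simp add: word_rel_def)
  also have "\<dots> = word_rel G V u O word_rel G V v" by (simp add: foldr_comp word_rel_def)
  finally show ?thesis .
qed

lemma W_single: "word_rel G V [l] = letter_rel G l"
  using comp_Id[OF letter_sub] by (simp add: W_Cons W_Nil)

lemma W_winv: "word_rel G V (winv u) = (word_rel G V u)\<inverse>"
proof (induction u)
  case Nil then show ?case by (simp add: winv_def W_Nil)
next
  case (Cons l u)
  have w: "winv (l # u) = winv u @ [(fst l, \<not> snd l)]"
    by (cases l) (simp add: winv_def)
  have "letter_rel G (fst l, \<not> snd l) = (letter_rel G l)\<inverse>"
    by (auto simp: letter_rel_def)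
  then show ?case using Cons using letter_sub[of l] by (simp add: w W_append W_single W_Cons W_Nil converse_relcomp) blast
qed

lemma W_pi: "partial_injection_on V (word_rel G V u)"
  unfolding partial_injection_on_def
proof (intro conjI)
  show "word_rel G V u \<subseteq> V \<times> V" by (rule W_sub)
  show "single_valued (word_rel G V u)"
  proof (induction u)
    case Nil then show ?case by (auto simp: W_Nil single_valued_def Id_on_def)
  next
    case (Cons l u) then show ?case
      using letter_sv(1)[of l] by (simp add: W_Cons single_valued_relcomp)
  qed
  show "single_valued ((word_rel G V u)\<inverse>)"
  proof (induction u)
    case Nil then show ?case by (auto simp: W_Nil single_valued_def Id_on_def)
  next
    case (Cons l u) then show ?case
      using letter_sv(2)[of l] by (simp add: W_Cons converse_relcomp single_valued_relcomp)
  qed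
qed

lemma wag1: "single_valued (R\<inverse>) \<Longrightarrow> R O R\<inverse> O R = R"
  unfolding single_valued_def by auto

lemma inv_id: "single_valued (R\<inverse>) \<Longrightarrow> R O R\<inverse> = Id_on (Domain R)"
  unfolding single_valued_def by blast

lemma W_wag1: "word_rel G V (u @ winv u @ u) = word_rel G V u"
  using W_pi[of u] by (simp add: W_append W_winv wag1 partial_injection_on_def)

lemma W_wag2: "word_rel G V (u @ winv u @ v @ winv v) = word_rel G V (v @ winv v @ u @ winv u)"
proof -
  have a: "word_rel G V u O (word_rel G V u)\<inverse> = Id_on (Domain (word_rel G V u))"
    using W_pi[of u] by (simp add: inv_id partial_injection_on_def)
  have b: "word_rel G V v O (word_rel G V v)\<inverse> = Id_on (Domain (word_rel G V v))"
    using W_pi[of v] by (simp add: inv_id partial_injection_on_def)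
  show ?thesis
    by (simp add: W_append W_winv O_assoc[symmetric] a b) blast
qed

end


lemma sub_step: "set vs \<noteq> {0..Suc k} \<Longrightarrow> Min ({0..Suc k} - set vs) = i \<Longrightarrow>
  sub face (Suc k) c vs = sub face k (face c i) (map (\<lambda>s. if s < i then s else s - 1) vs)"
  unfolding sub.simps(2) by (simp only: Let_def if_False)

lemma sub_full: "set vs = {0..Suc k} \<Longrightarrow> sub face (Suc k) c vs = c"
  unfolding sub.simps(2) by (rule if_P)

declare sub.simps(2)[simp del]

lemma neq: "x \<le> Suc k \<Longrightarrow> x \<notin> set vs \<Longrightarrow> set vs \<noteq> {0..Suc k}"
  by auto

lemma R_Suc: "sub face (Suc k) c [0] = sub face k (face c 1) [0]"
proof -
  have h1: "set [0::nat] \<noteq> {0..Suc k}" by (rule neq[of "Suc k"]) simp_all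
  have h2: "Min ({0..Suc k} - set [0::nat]) = 1" by (rule Min_eqI) auto
  show ?thesis using sub_step[OF h1 h2, of face c] by simp
qed

lemma E_Suc: "sub face (Suc (Suc k)) c [0,1] = sub face (Suc k) (face c 2) [0,1]"
proof -
  have h1: "set [0::nat,1] \<noteq> {0..Suc (Suc k)}" by (rule neq[of "Suc (Suc k)"]) simp_all
  have h2: "Min ({0..Suc (Suc k)} - set [0::nat,1]) = 2" by (rule Min_eqI) auto
  show ?thesis using sub_step[OF h1 h2, of face c] by simp
qed

lemma E_one: "sub face (Suc 0) c [0,1] = c"
  by (rule sub_full) (simp add: atLeast0_atMost_Suc insert_commute)

lemma one_1: "sub face (Suc 0) e [1] = face e 0"
proof -
  have h1: "set [1::nat] \<noteq> {0..Suc 0}" by (rule neq[of 0]) simp_all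
  have h2: "Min ({0..Suc 0} - set [1::nat]) = 0" by (rule Min_eqI) auto
  show ?thesis using sub_step[OF h1 h2, of face e] by simp
qed

lemma one_0: "sub face (Suc 0) e [0] = face e 1"
  using R_Suc[of face 0 e] by simp

lemma two_12: "sub face 2 c [1,2] = face c 0"
proof -
  have h1: "set [1::nat,2] \<noteq> {0..Suc (Suc 0)}" by (rule neq[of 0]) simp_all
  have h2: "Min ({0..Suc (Suc 0)} - set [1::nat,2]) = 0" by (rule Min_eqI) auto
  have "sub face (Suc (Suc 0)) c [1,2] = sub face (Suc 0) (face c 0) [0,1]"
    using sub_step[OF h1 h2, of face c] by simp
  then show ?thesis using E_one[of face "face c 0"] by (simp add: numeral_2_eq_2)
qed

lemma two_02: "sub face 2 c [0,2] = face c 1"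
proof -
  have h1: "set [0::nat,2] \<noteq> {0..Suc (Suc 0)}" by (rule neq[of 1]) simp_all
  have h2: "Min ({0..Suc (Suc 0)} - set [0::nat,2]) = 1" by (rule Min_eqI) auto
  have "sub face (Suc (Suc 0)) c [0,2] = sub face (Suc 0) (face c 1) [0,1]"
    using sub_step[OF h1 h2, of face c] by simp
  then show ?thesis using E_one[of face "face c 1"] by (simp add: numeral_2_eq_2)
qed

lemma two_01: "sub face 2 c [0,1] = face c 2"
proof -
  have "sub face (Suc (Suc 0)) c [0,1] = face c 2"
    using E_Suc[of face 0 c] E_one[of face "face c 2"] by simp
  then show ?thesis by (simp add: numeral_2_eq_2)
qed

context
  fixes C dim face
  assumes DC: "delta_complex C dim face"
begin

lemma face_in: "c \<in> C \<Longrightarrow> 0 < dim c \<Longrightarrow> i \<le> dim c \<Longrightarrow> face c i \<in> C \<and> dim (face c i) = dim c - 1"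
  using DC unfolding delta_complex_def by blast

lemma face_face: "c \<in> C \<Longrightarrow> 2 \<le> dim c \<Longrightarrow> i < j \<Longrightarrow> j \<le> dim c \<Longrightarrow>
   face (face c j) i = face (face c i) (j - 1)"
  using DC unfolding delta_complex_def by blast

lemma R_in: "c \<in> C \<Longrightarrow> dim c = k \<Longrightarrow> sub face k c [0] \<in> C \<and> dim (sub face k c [0]) = 0"
proof (induction k arbitrary: c)
  case 0 then show ?case by simp
next
  case (Suc k)
  then have "face c 1 \<in> C \<and> dim (face c 1) = k" using face_in[of c 1] by simp
  then show ?case using Suc.IH by (simp add: R_Suc)
qed

lemma R_faces: "d \<in> C \<Longrightarrow> dim d = Suc m \<Longrightarrow> 1 \<le> j \<Longrightarrow> j \<le> Suc m \<Longrightarrow>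
    sub face m (face d j) [0] = sub face m (face d 1) [0]"
proof (induction m arbitrary: d j)
  case 0 then show ?case by simp
next
  case (Suc m)
  show ?case
  proof (cases "j = 1")
    case True then show ?thesis by simp
  next
    case False
    have d1: "face d 1 \<in> C \<and> dim (face d 1) = Suc m" using face_in[of d 1] Suc.prems by simp
    have "sub face (Suc m) (face d j) [0] = sub face m (face (face d j) 1) [0]" by (simp add: R_Suc)
    also have "face (face d j) 1 = face (face d 1) (j - 1)"
      using face_face[of d 1 j] Suc.prems False by simp
    also have "sub face m (face (face d 1) (j - 1)) [0] = sub face m (face (face d 1) 1) [0]"
      using Suc.IH[of "face d 1" "j - 1"] d1 Suc.prems False by simp
    also have "\<dots> = sub face (Suc m) (face d 1) [0]" by (simp add: R_Suc)
    finally show ?thesis .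
  qed
qed

lemma edge: "d \<in> C \<Longrightarrow> dim d = Suc m \<Longrightarrow>
   sub face (Suc m) d [0,1] \<in> C \<and> dim (sub face (Suc m) d [0,1]) = 1 \<and>
   face (sub face (Suc m) d [0,1]) 1 = sub face (Suc m) d [0] \<and>
   face (sub face (Suc m) d [0,1]) 0 = sub face m (face d 0) [0]"
proof (induction m arbitrary: d)
  case 0 then show ?case using E_one[of face d] one_0[of face d] by simp
next
  case (Suc m)
  have d2: "face d 2 \<in> C \<and> dim (face d 2) = Suc m" using face_in[of d 2] Suc.prems by simp
  note IH = Suc.IH[OF conjunct1[OF d2] conjunct2[OF d2]]
  have a: "sub face (Suc m) (face d 2) [0] = sub face (Suc m) (face d 1) [0]"
    using R_faces[of d "Suc m" 2] Suc.prems by simp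
  have b: "face (face d 2) 0 = face (face d 0) 1"
    using face_face[of d 0 2] Suc.prems by simp
  have e: "sub face (Suc (Suc m)) d [0,1] = sub face (Suc m) (face d 2) [0,1]" by (rule E_Suc)
  have r: "sub face (Suc (Suc m)) d [0] = sub face (Suc m) (face d 1) [0]" by (rule R_Suc)
  have r0: "sub face (Suc m) (face d 0) [0] = sub face m (face (face d 0) 1) [0]" by (rule R_Suc)
  show ?case unfolding e r r0 using IH a b by simp
qed

end

lemma sub_lab:
  assumes DC: "delta_complex C dim face"
    and L: "\<forall>c\<in>C. \<forall>i. 0 < dim c \<and> i \<le> dim c \<longrightarrow> lab (face c i) = faceB (lab c) i"
  shows "c \<in> C \<Longrightarrow> dim c = k \<Longrightarrow> set vs \<subseteq> {0..k} \<Longrightarrow> lab (sub face k c vs) = sub faceB k (lab c) vs"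
proof (induction k arbitrary: c vs)
  case 0 then show ?case by simp
next
  case (Suc k)
  show ?case
  proof (cases "set vs = {0..Suc k}")
    case True then show ?thesis by (simp add: sub_full)
  next
    case False
    define i where "i = Min ({0..Suc k} - set vs)"
    have ne: "{0..Suc k} - set vs \<noteq> {}" using False Suc.prems(3) by auto
    have "i \<in> {0..Suc k} - set vs" unfolding i_def using ne by (intro Min_in) auto
    then have il: "i \<le> Suc k" by simp
    have fi: "face c i \<in> C \<and> dim (face c i) = k" using face_in[OF DC, of c i] Suc.prems il by simp
    have "lab (face c i) = faceB (lab c) i" using L Suc.prems il by auto
    have iv: "i \<notin> set vs" using \<open>i \<in> {0..Suc k} - set vs\<close> by simp
    have sv: "set (map (\<lambda>s. if s < i then s else s - 1) vs) \<subseteq> {0..k}"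
    proof
      fix x assume "x \<in> set (map (\<lambda>s. if s < i then s else s - 1) vs)"
      then obtain s where s: "s \<in> set vs" "x = (if s < i then s else s - 1)" by auto
      have "s \<le> Suc k" "s \<noteq> i" using s(1) Suc.prems(3) iv by auto
      then show "x \<in> {0..k}" using s(2) il by auto
    qed
    then show ?thesis using Suc.IH[OF conjunct1[OF fi] conjunct2[OF fi] sv] \<open>lab (face c i) = faceB (lab c) i\<close>
      by (simp only: sub_step[OF False i_def[symmetric]])
  qed
qed



declare sub.simps(2)[simp del]

locale LC =
  fixes C :: "'c set" and dim :: "'c \<Rightarrow> nat" and face :: "'c \<Rightarrow> nat \<Rightarrow> 'c"
    and lab :: "'c \<Rightarrow> 'a option"
    and X :: "'a set" and P :: "nat \<Rightarrow> 'a set" and n :: nat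
    and faceB :: "'a option \<Rightarrow> nat \<Rightarrow> 'a option"
  assumes BS: "B_structure X P n faceB"
    and LO: "labeled_over C dim face lab X P n faceB"
begin

abbreviation "V \<equiv> vertices C dim"
abbreviation "G \<equiv> gen_rel C dim face lab X"

lemma DC: "delta_complex C dim face" using LO by (simp add: labeled_over_def)
lemma labB: "c \<in> C \<Longrightarrow> lab c \<in> Bcells X P n \<and> Bdim X P (lab c) = dim c"
  using LO by (simp add: labeled_over_def)
lemma labF: "\<forall>c\<in>C. \<forall>i. 0 < dim c \<and> i \<le> dim c \<longrightarrow> lab (face c i) = faceB (lab c) i"
  using LO by (simp add: labeled_over_def)
lemma locinj: "c \<in> C \<Longrightarrow> c' \<in> C \<Longrightarrow> dim c = dim c' \<Longrightarrow> face_index (dim c) vs \<Longrightarrow>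
   subcell dim face c vs = subcell dim face c' vs \<Longrightarrow> lab c = lab c' \<Longrightarrow> c = c'"
  using LO unfolding labeled_over_def by blast

lemma XP: "X \<inter> P k = {}" using BS by (simp add: B_structure_def)
lemma PP: "j \<noteq> k \<Longrightarrow> P j \<inter> P k = {}" using BS by (simp add: B_structure_def)

lemma Bdim_P: "a \<in> P k \<Longrightarrow> Bdim X P (Some a) = k"
proof -
  assume a: "a \<in> P k"
  have "a \<notin> X" using XP[of k] a by auto
  moreover have "(THE k. a \<in> P k) = k"
    by (rule the_equality) (use a PP in auto)
  ultimately show ?thesis by (simp add: Bdim_def)
qed

lemma lab_pos: "c \<in> C \<Longrightarrow> 0 < dim c \<Longrightarrow> \<exists>a. lab c = Some a \<and> (a \<in> X \<or> (\<exists>k\<in>{2..n}. a \<in> P k))"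
proof -
  assume c: "c \<in> C" "0 < dim c"
  have "lab c \<noteq> None" using labB[OF c(1)] c(2) by (cases "lab c") (auto simp: Bdim_def)
  then obtain a where "lab c = Some a" by auto
  then show ?thesis using labB[OF c(1)] by (auto simp: Bcells_def)
qed

lemma lab_dim1: "c \<in> C \<Longrightarrow> dim c = 1 \<Longrightarrow> \<exists>a\<in>X. lab c = Some a"
proof -
  assume c: "c \<in> C" "dim c = 1"
  then obtain a where a: "lab c = Some a" "a \<in> X \<or> (\<exists>k\<in>{2..n}. a \<in> P k)"
    using lab_pos by fastforce
  show ?thesis
  proof (cases "a \<in> X")
    case True then show ?thesis using a by auto
  next
    case False
    then obtain k where "k \<in> {2..n}" "a \<in> P k" using a by auto
    then show ?thesis using Bdim_P labB[OF c(1)] a c(2) by auto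
  qed
qed

lemma lab_dim2: "c \<in> C \<Longrightarrow> 2 \<le> dim c \<Longrightarrow> lab c = Some b \<Longrightarrow> b \<notin> X"
  using labB[of c] by (auto simp: Bdim_def)

lemma lab_P: "c \<in> C \<Longrightarrow> lab c = Some \<rho> \<Longrightarrow> \<rho> \<in> P k \<Longrightarrow> dim c = k"
  using labB[of c] Bdim_P by auto

lemma subcell1: "e \<in> C \<Longrightarrow> dim e = 1 \<Longrightarrow> subcell dim face e [0] = face e 1 \<and> subcell dim face e [1] = face e 0"
  unfolding subcell_def using one_0[of face e] one_1[of face e] by simp

lemma face_vert: "e \<in> C \<Longrightarrow> dim e = 1 \<Longrightarrow> i \<le> 1 \<Longrightarrow> face e i \<in> V"
  using face_in[OF DC, of e i] by (simp add: vertices_def)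

lemma root_vert: "c \<in> C \<Longrightarrow> subcell dim face c [0] \<in> V"
  using R_in[OF DC, of c "dim c"] by (simp add: vertices_def subcell_def)

lemma G_sub: "G a \<subseteq> V \<times> V"
proof (cases "a \<in> X")
  case True then show ?thesis
    using face_vert subcell1 by (auto simp: gen_rel_def)
next
  case False then show ?thesis using root_vert by (auto simp: gen_rel_def)
qed

lemma G_sv: "single_valued (G a) \<and> single_valued ((G a)\<inverse>)"
proof (cases "a \<in> X")
  case True
  have fi0: "face_index 1 [0]" "face_index 1 [1]" by (auto simp: face_index_def)
  have "single_valued (G a)"
    unfolding single_valued_def gen_rel_def using True
    apply clarsimp
    subgoal for e e' using locinj[of e e' "[0]"] fi0 by auto
    done
  moreover have "single_valued ((G a)\<inverse>)"
    unfolding single_valued_def gen_rel_def using True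
    apply clarsimp
    subgoal for e e' using locinj[of e e' "[1]"] fi0 by auto
    done
  ultimately show ?thesis by simp
next
  case False then show ?thesis by (auto simp: gen_rel_def single_valued_def)
qed

sublocale GA G V
  by unfold_locales (use G_sub G_sv in auto)

lemma edge_step: "e \<in> C \<Longrightarrow> dim e = 1 \<Longrightarrow>
   (face e 1, face e 0) \<in> letter_rel G (the (lab e), False) \<and>
   (face e 0, face e 1) \<in> letter_rel G (the (lab e), True)"
proof -
  assume e: "e \<in> C" "dim e = 1"
  then obtain a where a: "a \<in> X" "lab e = Some a" using lab_dim1 by blast
  have "(subcell dim face e [0], subcell dim face e [1]) \<in> G a"
    using a e by (auto simp: gen_rel_def)
  then show ?thesis using subcell1[OF e] a by (simp add: letter_rel_def)
qed

lemma cell_step: "d \<in> C \<Longrightarrow> 2 \<le> dim d \<Longrightarrow>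
   (sub face (dim d) d [0], sub face (dim d) d [0]) \<in> letter_rel G (the (lab d), False)"
proof -
  assume d: "d \<in> C" "2 \<le> dim d"
  then obtain b where b: "lab d = Some b" using lab_pos[of d] by fastforce
  then have "b \<notin> X" using lab_dim2 d by auto
  then show ?thesis using d b by (auto simp: letter_rel_def gen_rel_def subcell_def)
qed

lemma loops: "(\<forall>l\<in>set ls. (v, v) \<in> letter_rel G l) \<Longrightarrow> (v, w) \<in> word_rel G V rest \<Longrightarrow>
   (v, w) \<in> word_rel G V (ls @ rest)"
  by (induction ls) (auto simp: W_Cons)

lemma bl_loop:
  assumes c: "c \<in> C" "lab c = Some \<rho>" "dim c = k" "k \<in> {2..n}"
  shows "(sub face k c [0], sub face k c [0]) \<in> word_rel G V (bl_word faceB k \<rho>)"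
proof -
  have SL: "\<And>vs. set vs \<subseteq> {0..k} \<Longrightarrow> sub faceB k (Some \<rho>) vs = lab (sub face k c vs)"
    using sub_lab[OF DC labF c(1) c(3)] c(2) by simp
  have k2: "2 \<le> k" using c(4) by simp
  have SL01: "sub faceB k (Some \<rho>) [0,1] = lab (sub face k c [0,1])" by (rule SL) (use k2 in auto)
  have FL: "\<And>i. i \<le> k \<Longrightarrow> faceB (Some \<rho>) i = lab (face c i)"
    using labF c by auto
  have v0: "sub face k c [0] \<in> V" using root_vert[OF c(1)] c(3) by (simp add: subcell_def)
  show ?thesis
  proof (cases "k = 2")
    case True
    have bl: "bl_word faceB k \<rho> = [(the (lab (face c 2)), False), (the (lab (face c 0)), False),
        (the (lab (face c 1)), True)]"
      using True SL[of "[0,1]"] SL[of "[1,2]"] SL[of "[0,2]"]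
      by (simp add: bl_word_def Let_def two_01 two_12 two_02 two_01[unfolded One_nat_def] two_12[unfolded One_nat_def] two_02[unfolded One_nat_def])
    have fc: "\<And>i. i \<le> 2 \<Longrightarrow> face c i \<in> C \<and> dim (face c i) = 1"
      using face_in[OF DC, of c] c True by auto
    have id1: "face (face c 2) 1 = face (face c 1) 1" using face_face[OF DC, of c 1 2] c True by simp
    have id2: "face (face c 2) 0 = face (face c 0) 1" using face_face[OF DC, of c 0 2] c True by simp
    have id3: "face (face c 1) 0 = face (face c 0) 0" using face_face[OF DC, of c 0 1] c True by simp
    have r: "sub face k c [0] = face (face c 1) 1" using True R_Suc[of face 1 c] one_0
      by (simp add: numeral_2_eq_2)
    have s1: "(face (face c 1) 1, face (face c 0) 1) \<in> letter_rel G (the (lab (face c 2)), False)"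
      using edge_step[of "face c 2"] fc[of 2] id1 id2 by simp
    have s2: "(face (face c 0) 1, face (face c 0) 0) \<in> letter_rel G (the (lab (face c 0)), False)"
      using edge_step[of "face c 0"] fc[of 0] by simp
    have s3: "(face (face c 0) 0, face (face c 1) 1) \<in> letter_rel G (the (lab (face c 1)), True)"
      using edge_step[of "face c 1"] fc[of 1] id3 by simp
    show ?thesis unfolding bl using s1 s2 s3 v0 r by (simp add: W_Cons W_Nil) blast
  next
    case False
    then obtain m where km: "k = Suc m" and m2: "2 \<le> m" using c(4)
      by (cases k) auto
    define e where "e = sub face k c [0,1]"
    have bl: "bl_word faceB k \<rho> = map (\<lambda>i. (the (lab (face c i)), False)) (rev [1..<k+1])
           @ [(the (lab e), False), (the (lab (face c 0)), False), (the (lab e), True)]"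
      using False SL01 FL by (auto simp add: bl_word_def Let_def e_def)
    have E: "e \<in> C \<and> dim e = 1 \<and> face e 1 = sub face k c [0] \<and> face e 0 = sub face m (face c 0) [0]"
      using edge[OF DC c(1), of m] c km e_def by simp
    have f0: "face c 0 \<in> C \<and> dim (face c 0) = m" using face_in[OF DC, of c 0] c km by simp
    have loopsP: "\<forall>l\<in>set (map (\<lambda>i. (the (lab (face c i)), False)) (rev [1..<k+1])).
        (sub face k c [0], sub face k c [0]) \<in> letter_rel G l"
    proof
      fix l assume "l \<in> set (map (\<lambda>i. (the (lab (face c i)), False)) (rev [1..<k+1]))"
      then obtain i where i: "1 \<le> i" "i \<le> k" "l = (the (lab (face c i)), False)" by auto
      have fi: "face c i \<in> C \<and> dim (face c i) = m" using face_in[OF DC, of c i] c km i by simp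
      have "sub face m (face c i) [0] = sub face m (face c 1) [0]"
        using R_faces[OF DC c(1), of m i] c km i by simp
      also have "\<dots> = sub face k c [0]" using km R_Suc[of face m c, symmetric] by simp
      finally show "(sub face k c [0], sub face k c [0]) \<in> letter_rel G l"
        using cell_step[of "face c i"] fi i m2 by simp
    qed
    have s1: "(sub face k c [0], sub face m (face c 0) [0]) \<in> letter_rel G (the (lab e), False)"
      using edge_step[of e] E by simp
    have s2: "(sub face m (face c 0) [0], sub face m (face c 0) [0]) \<in> letter_rel G (the (lab (face c 0)), False)"
      using cell_step[of "face c 0"] f0 m2 by simp
    have s3: "(sub face m (face c 0) [0], sub face k c [0]) \<in> letter_rel G (the (lab e), True)"
      using edge_step[of e] E by simp
    have "(sub face k c [0], sub face k c [0]) \<in> word_rel G V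
        [(the (lab e), False), (the (lab (face c 0)), False), (the (lab e), True)]"
      using s1 s2 s3 v0 by (simp add: W_Cons W_Nil) blast
    then show ?thesis unfolding bl by (rule loops[OF loopsP])
  qed
qed

lemma rel_ok: "(u, v) \<in> M_relations P n faceB \<Longrightarrow> word_rel G V u = word_rel G V v"
proof -
  assume "(u, v) \<in> M_relations P n faceB"
  then obtain \<rho> k where rk: "k \<in> {2..n}" "\<rho> \<in> P k" and
    uv: "(u = [(\<rho>, False), (\<rho>, False)] \<and> v = [(\<rho>, False)]) \<or>
         (u = [(\<rho>, False)] \<and> v = (\<rho>, False) # bl_word faceB k \<rho>)"
    unfolding M_relations_def by blast
  have nX: "\<rho> \<notin> X" using XP[of k] rk by auto
  define g where "g = G \<rho>"
  have gdef: "g = {(subcell dim face c [0], subcell dim face c [0]) |c. c \<in> C \<and> lab c = Some \<rho>}"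
    using nX by (simp add: g_def gen_rel_def)
  have lr: "letter_rel G (\<rho>, False) = g" by (simp add: letter_rel_def g_def)
  have gg: "g O g = g" unfolding gdef by blast
  show ?thesis
  proof (cases "u = [(\<rho>, False), (\<rho>, False)] \<and> v = [(\<rho>, False)]")
    case True
    then show ?thesis using gg lr W_append[of "[(\<rho>, False)]" "[(\<rho>, False)]"]
      by (simp add: W_single)
  next
    case False
    then have uv2: "u = [(\<rho>, False)]" "v = (\<rho>, False) # bl_word faceB k \<rho>" using uv by auto
    have loop: "\<And>c. c \<in> C \<Longrightarrow> lab c = Some \<rho> \<Longrightarrow>
       (subcell dim face c [0], subcell dim face c [0]) \<in> word_rel G V (bl_word faceB k \<rho>)"
      using bl_loop rk lab_P by (simp add: subcell_def)
    have sv: "single_valued (word_rel G V (bl_word faceB k \<rho>))"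
      using W_pi by (simp add: partial_injection_on_def)
    have "g O word_rel G V (bl_word faceB k \<rho>) = g"
    proof
      show "g \<subseteq> g O word_rel G V (bl_word faceB k \<rho>)" unfolding gdef using loop by blast
      show "g O word_rel G V (bl_word faceB k \<rho>) \<subseteq> g"
      proof
        fix x assume "x \<in> g O word_rel G V (bl_word faceB k \<rho>)"
        then obtain c w where cw: "c \<in> C" "lab c = Some \<rho>"
          "(subcell dim face c [0], w) \<in> word_rel G V (bl_word faceB k \<rho>)"
          "x = (subcell dim face c [0], w)" unfolding gdef by blast
        then have "w = subcell dim face c [0]" using loop[OF cw(1,2)] sv
          unfolding single_valued_def by blast
        then show "x \<in> g" using cw unfolding gdef by blast
      qed
    qed
    moreover have "word_rel G V [(\<rho>, False)] = g" using lr W_single by simp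
    ultimately show ?thesis using uv2 lr by (simp add: W_Cons)
  qed
qed

lemma cong_ok: "(u, v) \<in> M_equiv X P n faceB \<Longrightarrow> word_rel G V u = word_rel G V v"
  unfolding M_equiv_def
proof (induction rule: inv_cong.induct)
  case (ctx u v p q) then show ?case by (simp add: W_append)
next
  case (wagner1 u) show ?case by (rule W_wag1)
next
  case (wagner2 u v) show ?case by (rule W_wag2)
next
  case (rel u v) then show ?case by (rule rel_ok)
qed auto

end

theorem mainTheorem9:
  fixes C :: "'c set" and dim :: "'c \<Rightarrow> nat" and face :: "'c \<Rightarrow> nat \<Rightarrow> 'c"
    and lab :: "'c \<Rightarrow> 'a option"
    and X :: "'a set" and P :: "nat \<Rightarrow> 'a set" and n :: nat
    and faceB :: "'a option \<Rightarrow> nat \<Rightarrow> 'a option"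
  assumes "B_structure X P n faceB"
    and "labeled_over C dim face lab X P n faceB"
  shows "(\<forall>a \<in> M_alphabet X P n.
            partial_injection_on (vertices C dim) (gen_rel C dim face lab X a))
       \<and> (\<forall>w \<in> lists (M_alphabet X P n \<times> UNIV).
            partial_injection_on (vertices C dim) (word_rel (gen_rel C dim face lab X) (vertices C dim) w))
       \<and> (\<forall>u v. (u, v) \<in> M_equiv X P n faceB \<longrightarrow>
            word_rel (gen_rel C dim face lab X) (vertices C dim) u
          = word_rel (gen_rel C dim face lab X) (vertices C dim) v)"
  proof -
  interpret LC C dim face lab X P n faceB using assms by unfold_locales
  show ?thesis using G_sub G_sv W_pi cong_ok
    by (auto simp: partial_injection_on_def)
qed

end
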